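(* Let $X$ be a Banach space and $A,B\in\mathcal{L}(X)$. Then $\sigma_d(AB)=\sigma_d(BA)$.
   Context: $\mathcal{L}(X)$ is the Banach algebra of bounded linear operators on $X$. An element $T$ of $\mathcal{L}(X)$ has a g-Drazin inverse if there is $S\in\mathcal{L}(X)$ with $S=STS$, $S$ commuting with every operator that commutes with $T$, and $T-T^2S$ quasinilpotent (spectral radius $0$). The g-Drazin spectrum is $\sigma_d(T)=\{\lambda\in\mathbb{C} : \lambda I-T \text{ has no g-Drazin inverse in } \mathcal{L}(X)\}$. *)

theory Defs
  imports "HOL-Analysis.Analysis"
begin

text \<open>Complex Banach spaces: HOL-Analysis only provides real normed spaces,
so we add a complex scalar multiplication compatible with the real one.\<close>

class complex_normed_space = real_normed_vector +
  fixes scaleC :: "complex \<Rightarrow> 'a \<Rightarrow> 'a"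
  assumes scaleC_add_right: "scaleC a (x + y) = scaleC a x + scaleC a y"
    and scaleC_add_left: "scaleC (a + b) x = scaleC a x + scaleC b x"
    and scaleC_scaleC: "scaleC a (scaleC b x) = scaleC (a * b) x"
    and scaleC_one: "scaleC 1 x = x"
    and scaleR_scaleC: "scaleR r x = scaleC (of_real r) x"
    and norm_scaleC: "norm (scaleC a x) = cmod a * norm x"

class complex_banach = complex_normed_space + banach

definition Lop :: "('a::complex_normed_space \<Rightarrow> 'a) set" where
  "Lop = {T. bounded_linear T \<and> (\<forall>c x. T (scaleC c x) = scaleC c (T x))}"

definition invertible_op :: "('a::complex_normed_space \<Rightarrow> 'a) \<Rightarrow> bool" where
  "invertible_op T \<longleftrightarrow> (\<exists>S\<in>Lop. S \<circ> T = id \<and> T \<circ> S = id)"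

definition op_spectrum :: "('a::complex_normed_space \<Rightarrow> 'a) \<Rightarrow> complex set" where
  "op_spectrum T = {\<mu>. \<not> invertible_op (\<lambda>x. scaleC \<mu> x - T x)}"

text \<open>Spectral radius (taken to be 0 when the spectrum is empty, i.e. X = 0).\<close>
definition spectral_radius :: "('a::complex_normed_space \<Rightarrow> 'a) \<Rightarrow> real" where
  "spectral_radius T = Sup (insert 0 (cmod ` op_spectrum T))"

definition quasinilpotent :: "('a::complex_normed_space \<Rightarrow> 'a) \<Rightarrow> bool" where
  "quasinilpotent T \<longleftrightarrow> spectral_radius T = 0"

definition has_gDrazin_inverse :: "('a::complex_normed_space \<Rightarrow> 'a) \<Rightarrow> bool" where
  "has_gDrazin_inverse T \<longleftrightarrow>
     (\<exists>S\<in>Lop. S = S \<circ> T \<circ> S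
            \<and> (\<forall>U\<in>Lop. U \<circ> T = T \<circ> U \<longrightarrow> U \<circ> S = S \<circ> U)
            \<and> quasinilpotent (\<lambda>x. T x - T (T (S x))))"

definition gDrazin_spectrum :: "('a::complex_normed_space \<Rightarrow> 'a) \<Rightarrow> complex set" where
  "gDrazin_spectrum T = {\<mu>. \<not> has_gDrazin_inverse (\<lambda>x. scaleC \<mu> x - T x)}"

end

theory Submission
  imports Defs
begin


lemma scaleC_zero_right[simp]: "scaleC c (0::'a::complex_normed_space) = 0"
proof -
  have "scaleC c 0 + scaleC c 0 = scaleC c (0::'a) + 0" by (subst scaleC_add_right[symmetric]) simp
  then show ?thesis by (rule add_left_imp_eq)
qed
lemma scaleC_minus_right: "scaleC c (- x) = - scaleC c (x::'a::complex_normed_space)"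
proof -
  have "scaleC c (- x) + scaleC c x = 0" by (subst scaleC_add_right[symmetric]) simp
  then show ?thesis by (simp only: eq_neg_iff_add_eq_0)
qed
lemma scaleC_diff_right: "scaleC c (x - y) = scaleC c x - scaleC c (y::'a::complex_normed_space)"
  by (simp only: diff_conv_add_uminus scaleC_add_right scaleC_minus_right)
lemma scaleC_zero_left[simp]: "scaleC 0 x = (0::'a::complex_normed_space)"
proof -
  have "scaleC 0 x + scaleC 0 x = scaleC 0 x + (0::'a)" by (subst scaleC_add_left[symmetric]) simp
  then show ?thesis by (rule add_left_imp_eq)
qed
lemma scaleC_minus_left: "scaleC (- c) x = - scaleC c (x::'a::complex_normed_space)"
proof -
  have "scaleC (- c) x + scaleC c x = 0" by (subst scaleC_add_left[symmetric]) simp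
  then show ?thesis by (simp only: eq_neg_iff_add_eq_0)
qed
lemma scaleC_diff_left: "scaleC (a - b) x = scaleC a x - scaleC b (x::'a::complex_normed_space)"
  by (simp only: diff_conv_add_uminus scaleC_add_left scaleC_minus_left)
lemma bounded_linear_scaleC: "bounded_linear (scaleC c :: 'a::complex_normed_space \<Rightarrow> 'a)"
proof (rule bounded_linear_intro[where K="cmod c"])
  show "scaleC c (x + y) = scaleC c x + scaleC c y" for x y :: 'a by (rule scaleC_add_right)
  show "scaleC c (r *\<^sub>R x) = r *\<^sub>R scaleC c x" for r and x :: 'a
    unfolding scaleR_scaleC scaleC_scaleC by (simp only: mult.commute)
  show "norm (scaleC c x) \<le> norm x * cmod c" for x :: 'a by (simp add: norm_scaleC mult.commute)
qed

lemma Lop_id: "id \<in> Lop" by (simp add: Lop_def bounded_linear_ident[unfolded id_def] id_def)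
lemma Lop_zero: "(\<lambda>x. 0) \<in> Lop" by (simp add: Lop_def bounded_linear_zero)
lemma Lop_comp: "f \<in> Lop \<Longrightarrow> g \<in> Lop \<Longrightarrow> f \<circ> g \<in> Lop"
  by (auto simp: Lop_def o_def intro: bounded_linear_compose[of f g])
lemma Lop_add: "f \<in> Lop \<Longrightarrow> g \<in> Lop \<Longrightarrow> (\<lambda>x. f x + g x) \<in> Lop"
  by (auto simp: Lop_def scaleC_add_right intro: bounded_linear_add)
lemma Lop_minus: "f \<in> Lop \<Longrightarrow> (\<lambda>x. - f x) \<in> Lop"
  by (auto simp: Lop_def scaleC_minus_right intro: bounded_linear_minus)
lemma Lop_diff: "f \<in> Lop \<Longrightarrow> g \<in> Lop \<Longrightarrow> (\<lambda>x. f x - g x) \<in> Lop"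
  by (auto simp: Lop_def scaleC_diff_right intro: bounded_linear_sub)
lemma Lop_scaleC: "scaleC c \<in> Lop"
  by (auto simp: Lop_def bounded_linear_scaleC scaleC_scaleC mult.commute)

typedef (overloaded) 'a op = "Lop :: ('a::complex_normed_space \<Rightarrow> 'a) set"
  using Lop_id by blast

setup_lifting type_definition_op

instantiation op :: (complex_normed_space) "{ring,monoid_mult}" begin
lift_definition zero_op :: "'a op" is "\<lambda>x. 0" by (rule Lop_zero)
lift_definition one_op :: "'a op" is "id" by (rule Lop_id)
lift_definition plus_op :: "'a op \<Rightarrow> 'a op \<Rightarrow> 'a op" is "\<lambda>f g x. f x + g x" by (rule Lop_add)
lift_definition minus_op :: "'a op \<Rightarrow> 'a op \<Rightarrow> 'a op" is "\<lambda>f g x. f x - g x" by (rule Lop_diff)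
lift_definition uminus_op :: "'a op \<Rightarrow> 'a op" is "\<lambda>f x. - f x" by (rule Lop_minus)
lift_definition times_op :: "'a op \<Rightarrow> 'a op \<Rightarrow> 'a op" is "\<lambda>f g. f \<circ> g" by (rule Lop_comp)
lemma op_eqI: "(\<And>x. Rep_op a x = Rep_op b x) \<Longrightarrow> a = b" by (metis Rep_op_inject ext)
instance
proof
  fix a b c :: "'a op"
  show "a * b * c = a * (b * c)" by (rule op_eqI) (simp add: times_op.rep_eq)
  show "(a + b) * c = a * c + b * c" by (rule op_eqI) (simp add: times_op.rep_eq plus_op.rep_eq)
  show "a * (b + c) = a * b + a * c" using Rep_op[of a] 
    by (intro op_eqI) (simp add: times_op.rep_eq plus_op.rep_eq Lop_def linear_add bounded_linear.linear)
  show "a + b + c = a + (b + c)" by (rule op_eqI) (simp add: plus_op.rep_eq add.assoc)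
  show "a + b = b + a" by (rule op_eqI) (simp add: plus_op.rep_eq add.commute)
  show "0 + a = a" by (rule op_eqI) (simp add: plus_op.rep_eq zero_op.rep_eq)
  show "- a + a = 0" by (rule op_eqI) (simp add: plus_op.rep_eq zero_op.rep_eq uminus_op.rep_eq)
  show "a - b = a + - b" by (rule op_eqI) (simp add: plus_op.rep_eq minus_op.rep_eq uminus_op.rep_eq)
  show "1 * a = a" by (rule op_eqI) (simp add: times_op.rep_eq one_op.rep_eq)
  show "a * 1 = a" by (rule op_eqI) (simp add: times_op.rep_eq one_op.rep_eq)
qed
end



lift_definition sc :: "complex \<Rightarrow> 'a::complex_normed_space op" is "\<lambda>c. scaleC c" by (rule Lop_scaleC)

lemma Rep_op_Lop: "Rep_op t \<in> Lop" by (rule Rep_op)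
lemma Rep_op_lin: "bounded_linear (Rep_op t)" using Rep_op[of t] by (simp add: Lop_def)
lemma Rep_op_scaleC: "Rep_op t (scaleC c x) = scaleC c (Rep_op t x)" using Rep_op[of t] by (simp add: Lop_def)

lemma sc_comm: "sc c * x = x * sc c"
  by (rule op_eqI) (simp add: times_op.rep_eq sc.rep_eq Rep_op_scaleC)
lemma sc_mult: "sc (a * b) = sc a * sc b"
  by (rule op_eqI) (simp add: times_op.rep_eq sc.rep_eq scaleC_scaleC)
lemma sc_one: "sc 1 = 1"
  by (rule op_eqI) (simp add: one_op.rep_eq sc.rep_eq scaleC_one)
lemma sc_add: "sc (a + b) = sc a + sc b"
  by (rule op_eqI) (simp add: plus_op.rep_eq sc.rep_eq scaleC_add_left)
lemma sc_minus: "sc (- a) = - sc a"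
  by (rule op_eqI) (simp add: uminus_op.rep_eq sc.rep_eq scaleC_minus_left)

definition unit :: "'a::complex_normed_space op \<Rightarrow> bool" where
  "unit t \<longleftrightarrow> (\<exists>s. s * t = 1 \<and> t * s = 1)"
definition qnz :: "'a::complex_normed_space op \<Rightarrow> bool" where
  "qnz t \<longleftrightarrow> (\<forall>\<mu>. \<mu> \<noteq> 0 \<longrightarrow> unit (sc \<mu> - t))"
definition comm2 :: "'a::complex_normed_space op \<Rightarrow> 'a op \<Rightarrow> bool" where
  "comm2 t s \<longleftrightarrow> (\<forall>u. u * t = t * u \<longrightarrow> u * s = s * u)"
definition gdz :: "'a::complex_normed_space op \<Rightarrow> bool" where
  "gdz t \<longleftrightarrow> (\<exists>s. s = s * t * s \<and> comm2 t s \<and> qnz (t - t * t * s))"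

lemma unit_lr: assumes "x * r = 1" "l * x = (1::'a::complex_normed_space op)" shows "unit x"
proof -
  have "l = r" by (metis assms mult.assoc mult_1_left mult_1_right)
  thus ?thesis using assms unfolding unit_def by blast
qed

lemma inv_comm: assumes "y * v = 1" "v * y = 1" "x * y = y * (x::'a::complex_normed_space op)"
  shows "x * v = v * x"
proof -
  have "v * x = v * x * (y * v)" using assms by simp
  also have "\<dots> = v * (x * y) * v" by (simp add: mult.assoc)
  also have "\<dots> = (v * y) * x * v" using assms(3) by (simp add: mult.assoc)
  also have "\<dots> = x * v" using assms by simp
  finally show ?thesis by simp
qed

lemma jacobson_inv:
  fixes x y s :: "'a::complex_normed_space op"
  assumes "\<mu> \<noteq> 0" "(sc \<mu> - x * y) * s = 1"
  shows "(sc \<mu> - y * x) * (sc (inverse \<mu>) * (1 + y * s * x)) = 1"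
proof -
  have "(sc \<mu> - y * x) * (1 + y * s * x) = sc \<mu> - y * x + y * ((sc \<mu> - x * y) * s) * x"
    by (simp add: algebra_simps) (metis mult.assoc sc_comm)
  also have "\<dots> = sc \<mu>" using assms by simp
  finally have e: "(sc \<mu> - y * x) * (1 + y * s * x) = sc \<mu>" .
  have "(sc \<mu> - y * x) * (sc (inverse \<mu>) * (1 + y * s * x)) = sc (inverse \<mu>) * ((sc \<mu> - y * x) * (1 + y * s * x))"
    by (metis mult.assoc sc_comm)
  also have "\<dots> = 1" using assms(1) by (simp add: e sc_mult[symmetric] sc_one)
  finally show ?thesis .
qed

lemma jacobson_inv':
  fixes x y s :: "'a::complex_normed_space op"
  assumes "\<mu> \<noteq> 0" "s * (sc \<mu> - x * y) = 1"
  shows "(sc (inverse \<mu>) * (1 + y * s * x)) * (sc \<mu> - y * x) = 1"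
proof -
  have "(1 + y * s * x) * (sc \<mu> - y * x) = sc \<mu> - y * x + y * (s * (sc \<mu> - x * y)) * x"
    by (simp add: algebra_simps sc_comm[of \<mu>] mult.assoc)
  also have "\<dots> = sc \<mu>" using assms by simp
  finally have e: "(1 + y * s * x) * (sc \<mu> - y * x) = sc \<mu>" .
  have "(sc (inverse \<mu>) * (1 + y * s * x)) * (sc \<mu> - y * x) = sc (inverse \<mu>) * sc \<mu>"
    by (simp only: mult.assoc[of "sc (inverse \<mu>)"] e)
  then show ?thesis using assms(1) by (simp add: sc_mult[symmetric] sc_one)
qed

lemma jacobson:
  fixes x y :: "'a::complex_normed_space op"
  assumes "\<mu> \<noteq> 0" "unit (sc \<mu> - x * y)" shows "unit (sc \<mu> - y * x)"
  using assms jacobson_inv[OF assms(1)] jacobson_inv'[OF assms(1)] unfolding unit_def by blast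

lemma qnz_swap:
  fixes x y :: "'a::complex_normed_space op"
  assumes "qnz (x * y)" shows "qnz (y * x)"
  using assms jacobson unfolding qnz_def by blast




lemma unit_neg: "unit (- z) \<Longrightarrow> unit (z::'a::complex_normed_space op)"
proof -
  assume "unit (- z)"
  then obtain s where "s * - z = 1" "- z * s = 1" unfolding unit_def by blast
  then have "(- s) * z = 1" "z * (- s) = 1" by simp_all
  then show "unit z" unfolding unit_def by blast
qed

lemma qnz_one_plus: assumes "qnz q" shows "unit (1 + q)"
proof -
  have "unit (sc (-1) - q)" using assms unfolding qnz_def by simp
  moreover have "sc (-1) - q = - (1 + q)"
    by (rule op_eqI) (simp add: sc.rep_eq minus_op.rep_eq uminus_op.rep_eq plus_op.rep_eq one_op.rep_eq scaleC_minus_left scaleC_one)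
  ultimately have "unit (- (1 + q))" by (simp only:)
  then show ?thesis by (rule unit_neg)
qed

lemma comm_1_minus: "u * x = x * u \<Longrightarrow> u * (1 - x) = (1 - x) * (u::'a::complex_normed_space op)"
proof -
  assume h: "u * x = x * u"
  have "u * (1 - x) = u - u * x" by (simp only: right_diff_distrib mult_1_right)
  also have "\<dots> = u - x * u" by (simp only: h)
  also have "\<dots> = (1 - x) * u" by (simp only: left_diff_distrib mult_1_left)
  finally show ?thesis .
qed

lemma comm2_self: "comm2 t s \<Longrightarrow> t * s = s * t"
  unfolding comm2_def by blast

lemma G1x:
  fixes t :: "'a::complex_normed_space op"
  assumes "gdz t"
  shows "\<exists>p. p * p = p \<and> comm2 t p \<and> qnz (t * p) \<and> unit (t + p)"
proof -
  obtain s where s1: "s = s * t * s" and s2: "comm2 t s" and s3: "qnz (t - t * t * s)"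
    using assms unfolding gdz_def by blast
  have ts: "t * s = s * t" using comm2_self[OF s2] .
  define p where "p = 1 - t * s"
  have tsts: "t * s * (t * s) = t * s" using s1 ts by (metis mult.assoc)
  have pp: "p * p = p" unfolding p_def using tsts by (simp add: algebra_simps)
  have cp: "comm2 t p" unfolding comm2_def p_def
  proof (intro allI impI)
    fix u assume u: "u * t = t * u"
    have "u * s = s * u" using s2 u unfolding comm2_def by blast
    then have "u * (t * s) = t * s * u" using u by (metis mult.assoc)
    then show "u * (1 - t * s) = (1 - t * s) * u" by (rule comm_1_minus)
  qed
  have tp: "t * p = t - t * t * s" unfolding p_def by (simp add: algebra_simps mult.assoc)
  have qn: "qnz (t * p)" using s3 tp by simp
  have a1: "t * (s * s) = s * (t * s)" using ts by (metis mult.assoc)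
  have a2: "s * (t * s) = s" using s1 by (simp add: mult.assoc)
  have a3: "s * (s * t) = s" using s1 ts by (metis mult.assoc)
  have ps: "p * s = 0" unfolding p_def by (simp add: algebra_simps a1 a2)
  have sp: "s * p = 0" unfolding p_def by (simp add: algebra_simps ts a3)
  have pt: "p * t = t * p" using cp comm2_self by metis
  have e1: "(t + p) * (s + p) = 1 + t * p"
  proof -
    have "(t + p) * (s + p) = t * s + t * p + p * s + p * p" by (simp add: algebra_simps)
    also have "\<dots> = t * s + t * p + p" using ps pp by simp
    also have "\<dots> = 1 + t * p" unfolding p_def by simp
    finally show ?thesis .
  qed
  have e2: "(s + p) * (t + p) = 1 + t * p"
  proof -
    have "(s + p) * (t + p) = s * t + s * p + p * t + p * p" by (simp add: algebra_simps)
    also have "\<dots> = t * s + t * p + p" using sp pp pt ts by simp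
    also have "\<dots> = 1 + t * p" unfolding p_def by simp
    finally show ?thesis .
  qed
  obtain f where f: "f * (1 + t * p) = 1" "(1 + t * p) * f = 1"
    using qnz_one_plus[OF qn] unfolding unit_def by blast
  have "(t + p) * ((s + p) * f) = 1" using e1 f by (simp add: mult.assoc[symmetric])
  moreover have "(f * (s + p)) * (t + p) = 1" using e2 f by (simp add: mult.assoc)
  ultimately have "unit (t + p)" by (rule unit_lr)
  then show ?thesis using pp cp qn by blast
qed

lemma G2:
  fixes t p :: "'a::complex_normed_space op"
  assumes pp: "p * p = p" and cp: "comm2 t p" and qn: "qnz (t * p)" and un: "unit (t + p)"
  shows "gdz t"
proof -
  obtain v where v1: "v * (t + p) = 1" and v2: "(t + p) * v = 1" using un unfolding unit_def by blast
  have pt: "p * t = t * p" using cp comm2_self by metis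
  have vt: "t * v = v * t" by (rule inv_comm[OF v2 v1]) (simp add: algebra_simps pt)
  have vp: "p * v = v * p" by (rule inv_comm[OF v2 v1]) (simp add: algebra_simps pt pp)
  define s where "s = v * (1 - p)"
  have p1p: "p * (1 - p) = 0" by (simp add: algebra_simps pp)
  have tv: "t * v = 1 - p * v" using v2 by (simp add: algebra_simps eq_diff_eq)
  have tvp: "t * v * (1 - p) = 1 - p"
  proof -
    have pv: "p * v * (1 - p) = v * (p * (1 - p))" using vp by (metis mult.assoc)
    have "t * v * (1 - p) = (1 - p * v) * (1 - p)" using tv by simp
    also have "\<dots> = (1 - p) - p * v * (1 - p)" by (simp add: algebra_simps)
    also have "\<dots> = 1 - p" using p1p pv by simp
    finally show ?thesis .
  qed
  have "s * t * s = v * ((1 - p) * (t * v * (1 - p)))"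
    unfolding s_def by (simp only: mult.assoc)
  also have "\<dots> = s" unfolding s_def tvp using pp by (simp add: algebra_simps)
  finally have s1: "s = s * t * s" by simp
  have s3: "t - t * t * s = t * p"
  proof -
    have tvp': "t * (v * (1 - p)) = 1 - p" using tvp by (simp only: mult.assoc)
    have "t * t * s = t * (1 - p)" by (simp only: s_def mult.assoc tvp')
    then show ?thesis by (simp add: algebra_simps)
  qed
  have s2: "comm2 t s" unfolding comm2_def
  proof (intro allI impI)
    fix u assume u: "u * t = t * u"
    have up: "u * p = p * u" using cp u unfolding comm2_def by blast
    have uv: "u * v = v * u" by (rule inv_comm[OF v2 v1]) (simp add: algebra_simps u up)
    have u1: "u * (1 - p) = (1 - p) * u" using up by (rule comm_1_minus)
    have "u * (v * (1 - p)) = v * (u * (1 - p))" using uv by (metis mult.assoc)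
    also have "\<dots> = v * (1 - p) * u" using u1 by (simp only: mult.assoc)
    finally show "u * s = s * u" unfolding s_def .
  qed
  have "qnz (t - t * t * s)" using s3 qn by simp
  then show ?thesis unfolding gdz_def using s1 s2 by blast
qed




lemma comm_trick:
  fixes a b u e f :: "'a::complex_normed_space op"
  assumes u: "u * (b * a) = (b * a) * u" and f: "f * (a * u * b) = (a * u * b) * f"
    and e1: "e = (a * b) * f" and e2: "e = f * (a * b)"
  shows "u * (b * e * a) = (b * e * a) * u"
proof -
  have "u * (b * e * a) = (u * (b * a)) * (b * f * a)" unfolding e1 by (simp only: mult.assoc)
  also have "\<dots> = ((b * a) * u) * (b * f * a)" by (simp only: u)
  also have "\<dots> = b * (a * u * b * f) * a" by (simp only: mult.assoc)
  also have "\<dots> = b * (f * (a * u * b)) * a" by (simp only: f)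
  also have "\<dots> = (b * f * a) * (u * (b * a))" by (simp only: mult.assoc)
  also have "\<dots> = (b * f * a) * ((b * a) * u)" by (simp only: u)
  also have "\<dots> = (b * e * a) * u" unfolding e2 by (simp only: mult.assoc)
  finally show ?thesis .
qed

lemma aub_comm:
  fixes a b u :: "'a::complex_normed_space op"
  assumes u: "u * (b * a) = (b * a) * u"
  shows "(a * u * b) * (a * b) = (a * b) * (a * u * b)"
proof -
  have "(a * u * b) * (a * b) = a * (u * (b * a)) * b" by (simp only: mult.assoc)
  also have "\<dots> = a * ((b * a) * u) * b" by (simp only: u)
  also have "\<dots> = (a * b) * (a * u * b)" by (simp only: mult.assoc)
  finally show ?thesis .
qed

lemma comm_mult: "u * x = x * u \<Longrightarrow> u * y = y * u \<Longrightarrow> u * (x * y) = (x * y) * (u::'a::complex_normed_space op)"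
proof -
  assume h: "u * x = x * u" "u * y = y * u"
  have "u * (x * y) = (u * x) * y" by (simp only: mult.assoc)
  also have "\<dots> = x * (u * y)" by (simp only: h(1) mult.assoc)
  also have "\<dots> = (x * y) * u" by (simp only: h(2) mult.assoc)
  finally show ?thesis .
qed

lemma cline:
  fixes a b :: "'a::complex_normed_space op"
  assumes "gdz (a * b)"
  shows "gdz (b * a)"
proof -
  obtain d where d1: "d = d * (a * b) * d" and d2: "comm2 (a * b) d"
    and d3: "qnz (a * b - a * b * (a * b) * d)"
    using assms unfolding gdz_def by blast
  have xd: "(a * b) * d = d * (a * b)" using comm2_self[OF d2] .
  have f1: "(a * b) * (d * d) = d" using d1 xd by (metis mult.assoc)
  have f2: "(d * d) * (a * b) = d" using d1 xd by (metis mult.assoc)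
  define e where "e = d * d"
  define f where "f = d * d * d"
  define s where "s = b * e * a"
  have ss: "s * (b * a) * s = b * ((e * (a * b)) * ((a * b) * e)) * a"
    unfolding s_def by (simp only: mult.assoc)
  have s1: "s = s * (b * a) * s" unfolding ss using f1 f2 unfolding e_def s_def by simp
  have e1: "e = (a * b) * f" unfolding e_def f_def using f1 by (simp only: mult.assoc[symmetric])
  have e2: "e = f * (a * b)" unfolding e_def f_def using f2 by (simp only: mult.assoc)
  have s2: "comm2 (b * a) s" unfolding comm2_def s_def
  proof (intro allI impI)
    fix u assume u: "u * (b * a) = b * a * u"
    have "(a * u * b) * d = d * (a * u * b)"
      using d2 aub_comm[OF u] unfolding comm2_def by blast
    then have "(a * u * b) * f = f * (a * u * b)" unfolding f_def
      by (intro comm_mult) simp_all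
    then show "u * (b * e * a) = b * e * a * u"
      by (intro comm_trick[OF u _ e1 e2]) simp
  qed
  have q1: "(b * a) * (b * a) * s = b * ((a * b) * ((a * b) * e)) * a"
    unfolding s_def by (simp only: mult.assoc)
  have q2: "(a * b) * ((a * b) * e) = (a * b) * d" unfolding e_def using f1 by simp
  have q3: "b * a - (b * a) * (b * a) * s = b * ((1 - (a * b) * d) * a)"
    unfolding q1 q2 by (simp add: algebra_simps)
  have q4: "((1 - (a * b) * d) * a) * b = a * b - a * b * (a * b) * d"
  proof -
    have "((1 - (a * b) * d) * a) * b = (1 - (a * b) * d) * (a * b)" by (simp only: mult.assoc)
    also have "\<dots> = a * b - a * b * (d * (a * b))" by (simp add: algebra_simps)
    also have "\<dots> = a * b - a * b * (a * b) * d" by (simp only: xd[symmetric] mult.assoc)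
    finally show ?thesis .
  qed
  have "qnz (b * ((1 - (a * b) * d) * a))" by (rule qnz_swap) (simp only: q4 d3)
  then have s3: "qnz (b * a - b * a * (b * a) * s)" unfolding q3 .
  show ?thesis unfolding gdz_def using s1 s2 s3 by blast
qed




lemma comm_sc_minus: "u * y = y * u \<Longrightarrow> u * (sc c - y) = (sc c - y) * (u::'a::complex_normed_space op)"
proof -
  assume h: "u * y = y * u"
  have "u * (sc c - y) = u * sc c - u * y" by (simp only: right_diff_distrib)
  also have "\<dots> = sc c * u - y * u" by (simp only: h sc_comm)
  also have "\<dots> = (sc c - y) * u" by (simp only: left_diff_distrib)
  finally show ?thesis .
qed

lemma comm_sc_minus_rev: "u * (sc c - y) = (sc c - y) * u \<Longrightarrow> u * y = y * (u::'a::complex_normed_space op)"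
proof -
  assume h: "u * (sc c - y) = (sc c - y) * u"
  have "u * sc c - u * y = sc c * u - y * u" using h by (simp only: right_diff_distrib left_diff_distrib)
  then show ?thesis by (simp only: sc_comm) simp
qed

lemma jacobson_gd:
  fixes a b :: "'a::complex_normed_space op"
  assumes mu: "\<mu> \<noteq> 0" and g: "gdz (sc \<mu> - a * b)"
  shows "gdz (sc \<mu> - b * a)"
proof -
  define x where "x = a * b"
  define \<alpha> where "\<alpha> = sc \<mu> - x"
  obtain p where pp: "p * p = p" and cp: "comm2 \<alpha> p" and qp: "qnz (\<alpha> * p)" and up: "unit (\<alpha> + p)"
    using G1x[of \<alpha>] g unfolding \<alpha>_def x_def by blast
  have pa: "p * \<alpha> = \<alpha> * p" using comm2_self[OF cp] by simp
  have px: "p * x = x * p" using pa unfolding \<alpha>_def by (rule comm_sc_minus_rev)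
  obtain z where z1: "z * (sc \<mu> - \<alpha> * p) = 1" and z2: "(sc \<mu> - \<alpha> * p) * z = 1"
    using qp mu unfolding qnz_def unit_def by blast
  have p_ap: "p * (\<alpha> * p) = (\<alpha> * p) * p" using pa pp by (metis mult.assoc)
  have pz: "p * z = z * p" by (rule inv_comm[OF z2 z1]) (rule comm_sc_minus[OF p_ap])
  have x_a: "x * \<alpha> = \<alpha> * x" unfolding \<alpha>_def by (rule comm_sc_minus) simp
  have x_ap: "x * (\<alpha> * p) = (\<alpha> * p) * x" using x_a px[symmetric] by (rule comm_mult)
  have xz: "x * z = z * x" by (rule inv_comm[OF z2 z1]) (rule comm_sc_minus[OF x_ap])
  define w where "w = p * z"
  have xp: "x * p = p * (sc \<mu> - \<alpha> * p)"
  proof -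
    have "x * p = (sc \<mu> - \<alpha>) * p" unfolding \<alpha>_def by simp
    also have "\<dots> = sc \<mu> * p - \<alpha> * p" by (simp only: left_diff_distrib)
    also have "\<dots> = p * sc \<mu> - p * (\<alpha> * p)"
    proof -
      have pap: "p * (\<alpha> * p) = \<alpha> * p" by (simp only: mult.assoc[symmetric] pa) (simp only: mult.assoc pp)
      show ?thesis by (simp only: pap sc_comm)
    qed
    also have "\<dots> = p * (sc \<mu> - \<alpha> * p)" by (simp only: right_diff_distrib)
    finally show ?thesis .
  qed
  have xw: "x * w = p" unfolding w_def
    by (simp only: mult.assoc[symmetric] xp) (simp only: mult.assoc z2 mult_1_right)
  have wx: "w * x = p"
  proof -
    have "w * x = p * (x * z)" unfolding w_def by (simp only: mult.assoc xz)
    also have "\<dots> = (x * p) * z" by (simp only: mult.assoc[symmetric] px)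
    also have "\<dots> = x * w" unfolding w_def by (simp only: mult.assoc)
    finally show ?thesis using xw by simp
  qed
  have pw: "p * w = w" unfolding w_def by (simp only: mult.assoc[symmetric] pp)
  have wp: "w * p = w" unfolding w_def by (simp only: mult.assoc pz[symmetric]) (simp only: mult.assoc[symmetric] pp)
  define q where "q = b * w * a"
  have qq: "q * q = q"
  proof -
    have "q * q = b * ((w * (a * b)) * w) * a" unfolding q_def by (simp only: mult.assoc)
    also have "\<dots> = q" unfolding q_def using wx pw unfolding x_def by simp
    finally show ?thesis .
  qed
  define \<beta> where "\<beta> = sc \<mu> - b * a"
  have e1: "w = (a * b) * (w * w)" using xw pw unfolding x_def by (simp add: mult.assoc[symmetric])
  have e2: "w = (w * w) * (a * b)" using wx wp unfolding x_def by (simp add: mult.assoc)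
  have cq: "comm2 \<beta> q" unfolding comm2_def
  proof (intro allI impI)
    fix u assume u0: "u * \<beta> = \<beta> * u"
    have u: "u * (b * a) = (b * a) * u" using u0 unfolding \<beta>_def by (rule comm_sc_minus_rev)
    define v where "v = a * u * b"
    have vx: "v * x = x * v" unfolding v_def x_def by (rule aub_comm[OF u])
    have va: "v * \<alpha> = \<alpha> * v" unfolding \<alpha>_def by (rule comm_sc_minus[OF vx])
    have vp: "v * p = p * v" using cp va unfolding comm2_def by blast
    have vap: "v * (\<alpha> * p) = (\<alpha> * p) * v" using va vp by (rule comm_mult)
    have vz: "v * z = z * v" by (rule inv_comm[OF z2 z1]) (rule comm_sc_minus[OF vap])
    have vw: "v * w = w * v" unfolding w_def using vp vz by (rule comm_mult)
    have vww: "(w * w) * v = v * (w * w)" using comm_mult[OF vw vw] by simp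
    show "u * q = q * u" unfolding q_def
      by (rule comm_trick[OF u vww[unfolded v_def] e1 e2])
  qed
  have bq: "\<beta> * q = b * ((sc \<mu> * w - p) * a)"
  proof -
    have "\<beta> * q = sc \<mu> * (b * w * a) - b * ((a * b) * w) * a"
      unfolding \<beta>_def q_def by (simp add: left_diff_distrib mult.assoc)
    also have "\<dots> = b * (sc \<mu> * w * a) - b * p * a"
    proof -
      have h1: "sc \<mu> * (b * w * a) = (sc \<mu> * b) * (w * a)" by (simp only: mult.assoc)
      have h2: "(sc \<mu> * b) * (w * a) = (b * sc \<mu>) * (w * a)"
        by (rule arg_cong[where f="\<lambda>y. y * (w * a)"], rule sc_comm)
      have h3: "b * ((a * b) * w) * a = b * p * a" using xw unfolding x_def by simp
      show ?thesis unfolding h1 h2 h3 by (simp only: mult.assoc)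
    qed
    also have "\<dots> = b * ((sc \<mu> * w - p) * a)" by (simp add: algebra_simps)
    finally show ?thesis .
  qed
  have bq2: "((sc \<mu> * w - p) * a) * b = \<alpha> * p"
  proof -
    have "((sc \<mu> * w - p) * a) * b = sc \<mu> * (w * x) - p * x" unfolding x_def
      by (simp add: left_diff_distrib mult.assoc)
    also have "\<dots> = sc \<mu> * p - x * p" using wx px by simp
    also have "\<dots> = \<alpha> * p" unfolding \<alpha>_def by (simp only: left_diff_distrib)
    finally show ?thesis .
  qed
  have qbq: "qnz (\<beta> * q)" unfolding bq by (rule qnz_swap) (simp only: bq2 qp)
  have bpq: "\<beta> + q = sc \<mu> - b * ((1 - w) * a)"
    unfolding \<beta>_def q_def by (simp add: algebra_simps)
  have "((1 - w) * a) * b = x - p" unfolding x_def using wx[unfolded x_def]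
    by (simp add: algebra_simps)
  then have "sc \<mu> - ((1 - w) * a) * b = \<alpha> + p" unfolding \<alpha>_def by simp
  then have "unit (sc \<mu> - ((1 - w) * a) * b)" using up by simp
  then have "unit (\<beta> + q)" unfolding bpq by (rule jacobson[OF mu])
  then have "gdz \<beta>" using G2[OF qq cq qbq] by simp
  then show ?thesis unfolding \<beta>_def .
qed




lemma Rep_pow_0: "Rep_op (t ^ 0) y = y" by (simp add: one_op.rep_eq)
lemma Rep_pow_Suc: "Rep_op (t ^ Suc n) y = Rep_op t (Rep_op (t ^ n) y)"
  by (simp add: times_op.rep_eq)
lemma Rep_pow_Suc2: "Rep_op (t ^ Suc n) y = Rep_op (t ^ n) (Rep_op t y)"
  by (simp only: power_Suc2 times_op.rep_eq o_def)

lemma Rep_pow_Suc3: "Rep_op (t * t ^ n) y = Rep_op (t ^ n) (Rep_op t y)"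
  by (simp only: power_Suc[symmetric] Rep_pow_Suc2)

lemma neumann_aux:
  fixes t :: "'a::complex_banach op"
  assumes K: "K > 0" "\<And>x. norm (Rep_op t x) \<le> norm x * K" and mu: "cmod \<mu> > K"
  shows "unit (sc \<mu> - t)"
proof -
  define T where "T = Rep_op t"
  define P where "P n = Rep_op (t ^ n)" for n
  have cm: "cmod \<mu> > 0" using mu K(1) by linarith
  have mu0: "\<mu> \<noteq> 0" using cm by auto
  have Pb: "norm (P n y) \<le> K ^ n * norm y" for n y
  proof (induction n)
    case 0 show ?case by (simp add: P_def Rep_pow_0 one_op.rep_eq)
  next
    case (Suc n)
    have "norm (P (Suc n) y) \<le> norm (P n y) * K" unfolding P_def Rep_pow_Suc using K(2) by blast
    also have "\<dots> \<le> K ^ n * norm y * K" using Suc K(1) by (simp add: mult_right_mono)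
    finally show ?case by (simp add: algebra_simps)
  qed
  define r where "r = K / cmod \<mu>"
  have r0: "0 < r" "r < 1" using K(1) mu cm unfolding r_def by (auto simp: field_simps)
  define f where "f (y::'a) n = scaleC (inverse \<mu> ^ Suc n) (P n y)" for y n
  define gg where "gg (y::'a) n = scaleC (inverse \<mu> ^ n) (P n y)" for y n
  define gb where "gb (y::'a) n = norm y / cmod \<mu> * r ^ n" for y n
  have fb: "norm (f y n) \<le> gb y n" for y n
  proof -
    have "norm (f y n) = inverse (cmod \<mu>) ^ Suc n * norm (P n y)"
      unfolding f_def by (simp add: norm_scaleC norm_mult norm_power norm_inverse)
    also have "\<dots> \<le> inverse (cmod \<mu>) ^ Suc n * (K ^ n * norm y)"
      by (rule mult_left_mono[OF Pb]) simp
    also have "\<dots> = gb y n" unfolding gb_def r_def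
      by (simp add: power_divide field_simps)
    finally show ?thesis .
  qed
  have gbs: "summable (gb y)" for y
    unfolding gb_def by (rule summable_mult, rule summable_geometric) (use r0 in simp)
  have fs: "summable (f y)" for y
    by (rule summable_comparison_test'[OF gbs, of 0]) (rule fb)
  have ggb: "norm (gg y n) \<le> norm y * r ^ n" for y n
  proof -
    have "norm (gg y n) = inverse (cmod \<mu>) ^ n * norm (P n y)"
      unfolding gg_def by (simp add: norm_scaleC norm_mult norm_power norm_inverse)
    also have "\<dots> \<le> inverse (cmod \<mu>) ^ n * (K ^ n * norm y)"
      by (rule mult_left_mono[OF Pb]) simp
    also have "\<dots> = norm y * r ^ n" unfolding r_def
      by (simp add: power_divide field_simps)
    finally show ?thesis .
  qed
  have gg0: "gg y \<longlonglongrightarrow> 0" for y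
  proof (rule Lim_null_comparison)
    show "\<forall>\<^sub>F n in sequentially. norm (gg y n) \<le> norm y * r ^ n" using ggb by simp
    show "(\<lambda>n. norm y * r ^ n) \<longlonglongrightarrow> 0"
      using r0 by (intro tendsto_mult_right_zero LIMSEQ_power_zero) simp
  qed
  have tel: "(\<lambda>n. gg y n - gg y (Suc n)) sums y" for y
    using telescope_sums'[OF gg0[of y]] by (simp add: gg_def P_def Rep_pow_0 one_op.rep_eq scaleC_one)
  have Tlin: "bounded_linear T" unfolding T_def by (rule Rep_op_lin)
  have Plin: "bounded_linear (P n)" for n unfolding P_def by (rule Rep_op_lin)
  have sf: "scaleC \<mu> (f y n) = gg y n" for y n
    unfolding f_def gg_def using mu0 by (simp add: scaleC_scaleC field_simps)
  have Tf: "T (f y n) = gg y (Suc n)" for y n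
    unfolding f_def gg_def T_def P_def by (simp add: Rep_op_scaleC times_op.rep_eq)
  define S where "S (y::'a) = suminf (f y)" for y
  define L where "L (y::'a) = scaleC \<mu> y - T y" for y
  have LS: "L (S y) = y" for y
  proof -
    have a: "(\<lambda>n. scaleC \<mu> (f y n)) sums scaleC \<mu> (S y)"
      unfolding S_def by (rule bounded_linear.sums[OF bounded_linear_scaleC]) (use fs in \<open>simp add: summable_sums\<close>)
    have b: "(\<lambda>n. T (f y n)) sums T (S y)"
      unfolding S_def by (rule bounded_linear.sums[OF Tlin]) (use fs in \<open>simp add: summable_sums\<close>)
    have "(\<lambda>n. scaleC \<mu> (f y n) - T (f y n)) sums (L (S y))"
      unfolding L_def by (rule sums_diff[OF a b])
    moreover have "(\<lambda>n. scaleC \<mu> (f y n) - T (f y n)) = (\<lambda>n. gg y n - gg y (Suc n))"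
      by (simp add: sf Tf)
    ultimately show ?thesis using tel sums_unique2 by metis
  qed
  have SL: "S (L y) = y" for y
  proof -
    have "f (L y) n = gg y n - gg y (Suc n)" for n
    proof -
      have "P n (L y) = scaleC \<mu> (P n y) - P (Suc n) y"
        unfolding L_def T_def P_def
        by (simp add: linear_diff[OF bounded_linear.linear[OF Rep_op_lin]] Rep_op_scaleC Rep_pow_Suc3)
      have c: "inverse \<mu> ^ Suc n * \<mu> = inverse \<mu> ^ n" using mu0 by (simp add: field_simps)
      have "f (L y) n = scaleC (inverse \<mu> ^ Suc n) (scaleC \<mu> (P n y) - P (Suc n) y)"
        unfolding f_def by (simp only: \<open>P n (L y) = _\<close>)
      also have "\<dots> = scaleC (inverse \<mu> ^ Suc n * \<mu>) (P n y) - scaleC (inverse \<mu> ^ Suc n) (P (Suc n) y)"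
        by (simp only: scaleC_diff_right scaleC_scaleC)
      also have "\<dots> = gg y n - gg y (Suc n)" unfolding gg_def c by (rule refl)
      finally show ?thesis .
    qed
    then have "f (L y) = (\<lambda>n. gg y n - gg y (Suc n))" by (rule ext)
    then have "f (L y) sums y" using tel[of y] by (simp only:)
    then show ?thesis unfolding S_def by (simp add: sums_iff)
  qed
  have Ladd: "L (x + y) = L x + L y" for x y
    unfolding L_def by (simp add: scaleC_add_right linear_add[OF bounded_linear.linear[OF Tlin]])
  have LC: "L (scaleC c x) = scaleC c (L x)" for c x
    unfolding L_def T_def by (simp add: scaleC_diff_right Rep_op_scaleC scaleC_scaleC mult.commute)
  have Sadd: "S (x + y) = S x + S y" for x y
    by (metis LS SL Ladd)
  have SC: "S (scaleC c x) = scaleC c (S x)" for c x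
    by (metis LS SL LC)
  have Sbd: "norm (S y) \<le> norm y * (inverse (cmod \<mu>) * (1 / (1 - r)))" for y
  proof -
    have "norm (S y) \<le> suminf (gb y)" unfolding S_def by (rule norm_suminf_le[OF fb gbs])
    also have "suminf (gb y) = norm y / cmod \<mu> * suminf (\<lambda>n. r ^ n)" unfolding gb_def
      by (rule suminf_mult, rule summable_geometric) (use r0 in simp)
    also have "suminf (\<lambda>n. r ^ n) = 1 / (1 - r)" by (rule suminf_geometric) (use r0 in simp)
    finally show ?thesis by (simp add: field_simps)
  qed
  have Sbl: "bounded_linear S"
  proof (rule bounded_linear_intro[OF Sadd])
    show "S (r *\<^sub>R x) = r *\<^sub>R S x" for r x by (simp only: scaleR_scaleC SC)
    show "norm (S x) \<le> norm x * (inverse (cmod \<mu>) * (1 / (1 - r)))" for x by (rule Sbd)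
  qed
  have SLop: "S \<in> Lop" unfolding Lop_def using Sbl SC by blast
  have RL: "Rep_op (sc \<mu> - t) = L" unfolding L_def T_def by (simp add: fun_eq_iff minus_op.rep_eq sc.rep_eq)
  have "Abs_op S * (sc \<mu> - t) = 1"
    by (rule op_eqI) (simp add: times_op.rep_eq one_op.rep_eq Abs_op_inverse[OF SLop] RL SL)
  moreover have "(sc \<mu> - t) * Abs_op S = 1"
    by (rule op_eqI) (simp add: times_op.rep_eq one_op.rep_eq Abs_op_inverse[OF SLop] RL LS)
  ultimately show ?thesis unfolding unit_def by blast
qed




lemma neumann:
  fixes t :: "'a::complex_banach op"
  shows "\<exists>K. \<forall>\<mu>. cmod \<mu> > K \<longrightarrow> unit (sc \<mu> - t)"
proof -
  obtain K where K: "K > 0" "\<And>x. norm (Rep_op t x) \<le> norm x * K"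
    using bounded_linear.pos_bounded[OF Rep_op_lin[of t]] by blast
  show ?thesis using neumann_aux[OF K] by blast
qed

lemma ex_Lop: "(\<exists>S\<in>Lop. P S) \<longleftrightarrow> (\<exists>s. P (Rep_op s))"
proof
  assume "\<exists>S\<in>Lop. P S"
  then obtain S where "S \<in> Lop" "P S" by blast
  then have "P (Rep_op (Abs_op S))" by (simp add: Abs_op_inverse)
  then show "\<exists>s. P (Rep_op s)" by blast
next
  assume "\<exists>s. P (Rep_op s)"
  then show "\<exists>S\<in>Lop. P S" using Rep_op by blast
qed

lemma all_Lop: "(\<forall>S\<in>Lop. P S) \<longleftrightarrow> (\<forall>s. P (Rep_op s))"
  using ex_Lop[of "\<lambda>S. \<not> P S"] by blast

lemma Rep_eq_iff: "Rep_op s = Rep_op t \<longleftrightarrow> s = t" by (rule Rep_op_inject)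

lemma invertible_unit: "invertible_op (Rep_op t) \<longleftrightarrow> unit t"
proof -
  have "invertible_op (Rep_op t) \<longleftrightarrow> (\<exists>s. Rep_op (s * t) = Rep_op 1 \<and> Rep_op (t * s) = Rep_op 1)"
    unfolding invertible_op_def ex_Lop by (simp add: times_op.rep_eq one_op.rep_eq)
  also have "\<dots> \<longleftrightarrow> unit t" unfolding Rep_eq_iff unit_def ..
  finally show ?thesis .
qed

lemma rep_sc_minus: "(\<lambda>x. scaleC \<mu> x - Rep_op t x) = Rep_op (sc \<mu> - t)"
  by (simp add: fun_eq_iff minus_op.rep_eq sc.rep_eq)

lemma spec_eq: "op_spectrum (Rep_op t) = {\<mu>. \<not> unit (sc \<mu> - t)}"
  unfolding op_spectrum_def rep_sc_minus invertible_unit ..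

lemma qn_iff:
  fixes t :: "'a::complex_banach op"
  shows "quasinilpotent (Rep_op t) \<longleftrightarrow> qnz t"
proof
  assume q: "qnz t"
  have "op_spectrum (Rep_op t) \<subseteq> {0}" unfolding spec_eq using q unfolding qnz_def by blast
  then have "insert 0 (cmod ` op_spectrum (Rep_op t)) = {0}" by auto
  then show "quasinilpotent (Rep_op t)" unfolding quasinilpotent_def spectral_radius_def
    by (simp only: cSup_singleton)
next
  assume q: "quasinilpotent (Rep_op t)"
  show "qnz t" unfolding qnz_def
  proof (intro allI impI)
    fix \<mu> :: complex assume mu: "\<mu> \<noteq> 0"
    show "unit (sc \<mu> - t)"
    proof (rule ccontr)
      assume nu: "\<not> unit (sc \<mu> - t)"
      obtain K where K: "\<forall>\<mu>. cmod \<mu> > K \<longrightarrow> unit (sc \<mu> - t)" using neumann by blast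
      have bdd: "bdd_above (insert 0 (cmod ` op_spectrum (Rep_op t)))"
      proof (rule bdd_aboveI[where M="max K 0"])
        fix x assume "x \<in> insert 0 (cmod ` op_spectrum (Rep_op t))"
        then show "x \<le> max K 0" unfolding spec_eq using K by force
      qed
      have "cmod \<mu> \<in> insert 0 (cmod ` op_spectrum (Rep_op t))" unfolding spec_eq using nu by blast
      then have "cmod \<mu> \<le> spectral_radius (Rep_op t)" unfolding spectral_radius_def
        using bdd by (rule cSup_upper)
      then have "cmod \<mu> \<le> 0" using q unfolding quasinilpotent_def by simp
      then show False using mu by simp
    qed
  qed
qed

lemma gd_iff:
  fixes t :: "'a::complex_banach op"
  shows "has_gDrazin_inverse (Rep_op t) \<longleftrightarrow> gdz t"
proof -
  have e1: "(Rep_op s = Rep_op s \<circ> Rep_op t \<circ> Rep_op s) \<longleftrightarrow> s = s * t * s" for s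
    by (simp only: times_op.rep_eq[symmetric] Rep_eq_iff)
  have e2: "(\<forall>U\<in>Lop. U \<circ> Rep_op t = Rep_op t \<circ> U \<longrightarrow> U \<circ> Rep_op s = Rep_op s \<circ> U) \<longleftrightarrow> comm2 t s" for s
    unfolding all_Lop comm2_def by (simp only: times_op.rep_eq[symmetric] Rep_eq_iff)
  have e3: "(\<lambda>x. Rep_op t x - Rep_op t (Rep_op t (Rep_op s x))) = Rep_op (t - t * t * s)" for s
    by (simp add: fun_eq_iff minus_op.rep_eq times_op.rep_eq)
  show ?thesis unfolding has_gDrazin_inverse_def ex_Lop e1 e2 e3 qn_iff gdz_def ..
qed

lemma sc0: "sc 0 = 0" by (rule op_eqI) (simp add: sc.rep_eq zero_op.rep_eq)

lemma one_dir:
  fixes a b :: "'a::complex_normed_space op"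
  assumes "gdz (sc \<mu> - a * b)" shows "gdz (sc \<mu> - b * a)"
proof (cases "\<mu> = 0")
  case True
  have "gdz ((- a) * b)" using assms True by (simp add: sc0)
  then have "gdz (b * (- a))" by (rule cline)
  then show ?thesis using True by (simp add: sc0)
next
  case False
  then show ?thesis using assms by (rule jacobson_gd)
qed

theorem corollary4p3:
  fixes A B :: "'a::complex_banach \<Rightarrow> 'a"
  assumes "A \<in> Lop" and "B \<in> Lop"
  shows "gDrazin_spectrum (A \<circ> B) = gDrazin_spectrum (B \<circ> A)"
proof -
  obtain a where a: "A = Rep_op a" using assms(1) Abs_op_inverse by metis
  obtain b where b: "B = Rep_op b" using assms(2) Abs_op_inverse by metis
  have sp: "gDrazin_spectrum (Rep_op x \<circ> Rep_op y) = {\<mu>. \<not> gdz (sc \<mu> - x * y)}" for x y :: "'a op"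
  proof -
    have "(\<lambda>z. scaleC \<mu> z - (Rep_op x \<circ> Rep_op y) z) = Rep_op (sc \<mu> - x * y)" for \<mu>
      by (simp add: fun_eq_iff minus_op.rep_eq times_op.rep_eq sc.rep_eq)
    then show ?thesis unfolding gDrazin_spectrum_def by (simp add: gd_iff)
  qed
  show ?thesis unfolding a b sp using one_dir by blast
qed


end
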